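(* Let $(P_t)_{t\ge0}$ be a measurable Markovian transition function on a Polish space $E$ with Borel $\sigma$-algebra $\mathcal{B}$, and let $m$ be a nonzero finite positive measure on $(E,\mathcal{B})$. Suppose there exists a sequence $t_n\nearrow\infty$ with $c((P_t)_t,m,(t_n)_n)<m(E)$. Then there exists a compact set $K\subset E$ such that $$\limsup_{t\to\infty}\frac1t\int_0^t m(P_s1_K)\,ds>0.$$
   Context: $c((P_t)_t,m,(t_n)_n):=\lim_{\varepsilon\searrow0}\sup_{A\in\mathcal{B},\,m(A)\le\varepsilon}\sup_n\frac1{t_n}\int_0^{t_n}m(P_s1_A)\,ds$. A measurable Markovian transition function is a family of Markovian kernels with $P_tP_s=P_{t+s}$ and $(t,x)\mapsto P_tf(x)$ jointly measurable. *)

theory Defs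
  imports "HOL-Probability.Probability"
begin

definition markov_transition_function :: "(real \<Rightarrow> 'a::topological_space \<Rightarrow> 'a measure) \<Rightarrow> bool" where
  "markov_transition_function P \<longleftrightarrow>
     (\<forall>t\<ge>0. \<forall>x. prob_space (P t x) \<and> sets (P t x) = sets borel) \<and>
     (\<forall>t\<ge>0. \<forall>A\<in>sets borel. (\<lambda>x. measure (P t x) A) \<in> borel_measurable borel) \<and>
     (\<forall>s\<ge>0. \<forall>t\<ge>0. \<forall>x. \<forall>A\<in>sets borel.
        measure (P (t + s) x) A = (\<integral>y. measure (P s y) A \<partial>(P t x))) \<and>
     (\<forall>A\<in>sets borel. (\<lambda>(t, x). measure (P t x) A)
        \<in> borel_measurable (restrict_space borel {0..} \<Otimes>\<^sub>M borel))"

definition mP :: "(real \<Rightarrow> 'a::topological_space \<Rightarrow> 'a measure) \<Rightarrow> 'a measure \<Rightarrow> real \<Rightarrow> 'a set \<Rightarrow> real" where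
  "mP P m s A = (\<integral>x. measure (P s x) A \<partial>m)"

definition time_avg :: "(real \<Rightarrow> 'a::topological_space \<Rightarrow> 'a measure) \<Rightarrow> 'a measure \<Rightarrow> real \<Rightarrow> 'a set \<Rightarrow> real" where
  "time_avg P m t A = (1 / t) * (LINT s:{0..t}|lborel. mP P m s A)"

definition c_const :: "(real \<Rightarrow> 'a::topological_space \<Rightarrow> 'a measure) \<Rightarrow> 'a measure \<Rightarrow> (nat \<Rightarrow> real) \<Rightarrow> real" where
  "c_const P m tn = Lim (at_right 0)
     (\<lambda>\<epsilon>. SUP A\<in>{A\<in>sets borel. measure m A \<le> \<epsilon>}. SUP n. time_avg P m (tn n) A)"

end

theory Submission imports Defs begin

lemma mtf_meas_x:
  assumes "markov_transition_function P" "s \<ge> 0" "A \<in> sets borel" "sets m = sets borel"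
  shows "(\<lambda>x. measure (P s x) A) \<in> borel_measurable m"
  using assms unfolding markov_transition_function_def
  by (metis measurable_cong_sets)

lemma mtf_bound_int:
  assumes "markov_transition_function P" "s \<ge> 0" "A \<in> sets borel" "sets m = sets borel"
    "finite_measure m"
  shows "integrable m (\<lambda>x. measure (P s x) A)"
    "0 \<le> mP P m s A" "mP P m s A \<le> measure m (space m)"
proof -
  interpret finite_measure m by fact
  have pr: "\<And>x. prob_space (P s x)" using assms(1,2) unfolding markov_transition_function_def by blast
  have b: "\<And>x. 0 \<le> measure (P s x) A \<and> measure (P s x) A \<le> 1"
    using pr prob_space.prob_le_1 by auto
  show i: "integrable m (\<lambda>x. measure (P s x) A)"
    by (rule integrable_const_bound[where B=1]) (use b mtf_meas_x[OF assms(1-4)] in auto)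
  show "0 \<le> mP P m s A" unfolding mP_def using b by (simp add: integral_nonneg)
  have "mP P m s A \<le> (\<integral>x. 1 \<partial>m)" unfolding mP_def
    by (rule integral_mono[OF i]) (use b in auto)
  then show "mP P m s A \<le> measure m (space m)" by simp
qed

lemma mtf_meas_s:
  assumes "markov_transition_function P" "A \<in> sets borel" "sets m = sets borel"
    "finite_measure m"
  shows "(\<lambda>s. mP P m s A) \<in> borel_measurable (restrict_space borel {0..})"
proof -
  interpret finite_measure m by fact
  have f: "(\<lambda>(t, x). measure (P t x) A) \<in> borel_measurable (restrict_space borel {0..} \<Otimes>\<^sub>M borel)"
    using assms(1,2) unfolding markov_transition_function_def by blast
  have "sets (restrict_space borel {0..} \<Otimes>\<^sub>M borel) = sets (restrict_space borel {0::real..} \<Otimes>\<^sub>M m)"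
    by (rule sets_pair_measure_cong) (use assms(3) in auto)
  then have "(\<lambda>(t, x). measure (P t x) A) \<in> borel_measurable (restrict_space borel {0..} \<Otimes>\<^sub>M m)"
    using f measurable_cong_sets by blast
  then show ?thesis unfolding mP_def
    by (rule borel_measurable_lebesgue_integral)
qed

lemma mtf_set_integrable:
  assumes "markov_transition_function P" "A \<in> sets borel" "sets m = sets borel"
    "finite_measure m"
  shows "set_integrable lborel {0..t} (\<lambda>s. mP P m s A)"
proof -
  have "(\<lambda>s. indicator {0..} s *\<^sub>R mP P m s A) \<in> borel_measurable borel"
    using mtf_meas_s[OF assms] borel_measurable_restrict_space_iff[of "{0::real..}" borel "\<lambda>s. mP P m s A"] by simp
  then have m1: "(\<lambda>s. indicator {0..t} s *\<^sub>R (indicator {0..} s *\<^sub>R mP P m s A)) \<in> borel_measurable borel"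
    by measurable
  have e: "(\<lambda>s. indicator {0..t} s *\<^sub>R (indicator {0..} s *\<^sub>R mP P m s A)) = (\<lambda>s. indicator {0..t} s *\<^sub>R mP P m s A)"
    by (auto simp: indicator_def)
  show ?thesis unfolding set_integrable_def
  proof (rule integrableI_bounded_set[where A="{0..t}" and B="measure m (space m)"])
    show "(\<lambda>s. indicator {0..t} s *\<^sub>R mP P m s A) \<in> borel_measurable lborel"
      using m1 e by simp
  next
    show "AE x in lborel. x \<in> {0..t} \<longrightarrow> norm (indicator {0..t} x *\<^sub>R mP P m x A) \<le> measure m (space m)"
      using mtf_bound_int(2,3)[OF assms(1) _ assms(2,3,4)] by (auto simp: indicator_def)
  qed (auto simp: indicator_def emeasure_lborel_Icc_eq)
qed

lemma mtf_compl:
  assumes "markov_transition_function P" "s \<ge> 0" "K \<in> sets borel" "sets m = sets borel"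
    "finite_measure m"
  shows "mP P m s K + mP P m s (- K) = measure m (space m)"
proof -
  have KK: "- K \<in> sets borel" using assms(3) by auto
  have "\<And>x. measure (P s x) K + measure (P s x) (- K) = 1"
  proof -
    fix x
    have pr: "prob_space (P s x)" and se: "sets (P s x) = sets borel"
      using assms(1,2) unfolding markov_transition_function_def by blast+
    have sp: "space (P s x) = UNIV" using se sets_eq_imp_space_eq by fastforce
    have "measure (P s x) (space (P s x) - K) = 1 - measure (P s x) K"
      using prob_space.prob_compl[OF pr] se assms(3) by auto
    then show "measure (P s x) K + measure (P s x) (- K) = 1" using sp by (simp add: Compl_eq_Diff_UNIV)
  qed
  moreover have "mP P m s K + mP P m s (- K) = (\<integral>x. measure (P s x) K + measure (P s x) (- K) \<partial>m)"
    unfolding mP_def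
    by (rule Bochner_Integration.integral_add[symmetric]) (auto intro!: mtf_bound_int(1)[OF assms(1,2) _ assms(4,5)] assms(3) KK)
  ultimately have "mP P m s K + mP P m s (- K) = (\<integral>x. 1 \<partial>m)" by simp
  then show ?thesis by simp
qed

lemma mtf_avg_bound:
  assumes "markov_transition_function P" "A \<in> sets borel" "sets m = sets borel"
    "finite_measure m" "t > 0"
  shows "time_avg P m t A \<le> measure m (space m)"
proof -
  have "(LINT s:{0..t}|lborel. mP P m s A) \<le> (LINT s:{0..t}|lborel. measure m (space m))"
    by (rule set_integral_mono[OF mtf_set_integrable[OF assms(1-4)]])
      (auto simp: set_integrable_def emeasure_lborel_Icc_eq intro!: mtf_bound_int(3)[OF assms(1) _ assms(2-4)])
  also have "\<dots> = t * measure m (space m)"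
    using assms(5) by (subst set_integral_const) (auto simp: emeasure_lborel_Icc_eq)
  finally show ?thesis unfolding time_avg_def using assms(5)
    by (simp add: field_simps)
qed

lemma mtf_avg_compl:
  assumes "markov_transition_function P" "K \<in> sets borel" "sets m = sets borel"
    "finite_measure m" "t > 0"
  shows "time_avg P m t K + time_avg P m t (- K) = measure m (space m)"
proof -
  have KK: "- K \<in> sets borel" using assms(2) by auto
  have "(LINT s:{0..t}|lborel. mP P m s K) + (LINT s:{0..t}|lborel. mP P m s (- K))
      = (LINT s:{0..t}|lborel. mP P m s K + mP P m s (- K))"
    by (rule set_integral_add(2)[symmetric]) (rule mtf_set_integrable[OF assms(1) _ assms(3,4)]; use assms(2) KK in simp)+
  also have "\<dots> = (LINT s:{0..t}|lborel. measure m (space m))"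
    by (rule set_lebesgue_integral_cong) (auto intro!: mtf_compl[OF assms(1) _ assms(2-4)])
  also have "\<dots> = t * measure m (space m)"
    using assms(5) by (subst set_integral_const) (auto simp: emeasure_lborel_Icc_eq)
  finally show ?thesis unfolding time_avg_def using assms(5)
    by (simp add: field_simps)
qed

theorem proposition3p2:
  fixes P :: "real \<Rightarrow> 'a::polish_space \<Rightarrow> 'a measure"
    and m :: "'a measure"
    and tn :: "nat \<Rightarrow> real"
  assumes "markov_transition_function P"
    and "finite_measure m" and "sets m = sets borel" and "emeasure m (space m) \<noteq> 0"
    and "\<forall>n. tn n > 0" and "incseq tn" and "filterlim tn at_top sequentially"
    and "c_const P m tn < measure m (space m)"
  shows "\<exists>K. compact K \<and>
     Limsup at_top (\<lambda>t::real. ereal (time_avg P m t K)) > 0"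
proof -
  interpret finite_measure m by fact
  note mtf = assms(1) and fm = assms(2) and sm = assms(3)
  define M where "M = measure m (space m)"
  have spm: "space m = UNIV" using sm sets_eq_imp_space_eq by fastforce
  have Mpos: "M > 0" using assms(4) unfolding M_def
    by (simp add: emeasure_eq_measure zero_less_measure_iff)
  define S where "S = (\<lambda>\<epsilon>::real. {A\<in>sets borel. measure m A \<le> \<epsilon>})"
  define F where "F = (\<lambda>\<epsilon>. SUP A\<in>S \<epsilon>. SUP n. time_avg P m (tn n) A)"
  have ta: "\<And>A n. A \<in> sets borel \<Longrightarrow> time_avg P m (tn n) A \<le> M"
    unfolding M_def using mtf_avg_bound[OF mtf _ sm fm] assms(5) by blast
  have bdd1: "\<And>A. A \<in> sets borel \<Longrightarrow> bdd_above (range (\<lambda>n. time_avg P m (tn n) A))"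
    using ta by (meson bdd_aboveI2)
  have in1: "\<And>A. A \<in> sets borel \<Longrightarrow> (SUP n. time_avg P m (tn n) A) \<le> M"
    using ta by (simp add: cSUP_least)
  have Sne: "\<And>\<epsilon>. \<epsilon> \<ge> 0 \<Longrightarrow> S \<epsilon> \<noteq> {}"
    unfolding S_def by (metis (mono_tags, lifting) empty_iff mem_Collect_eq measure_empty sets.empty_sets)
  have bdd2: "\<And>\<epsilon>. bdd_above ((\<lambda>A. SUP n. time_avg P m (tn n) A) ` S \<epsilon>)"
    using in1 unfolding S_def by (intro bdd_aboveI2[where M=M]) auto
  have FM: "F \<epsilon> \<le> M" if "\<epsilon> \<ge> 0" for \<epsilon>
    unfolding F_def
  proof (rule cSUP_least)
    show "S \<epsilon> \<noteq> {}" by (rule Sne[OF that])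
    fix A assume "A \<in> S \<epsilon>"
    then show "(SUP n. time_avg P m (tn n) A) \<le> M" using in1 by (simp add: S_def)
  qed
  have "\<exists>\<epsilon>>0. F \<epsilon> < M"
  proof (rule ccontr)
    assume "\<not> ?thesis"
    then have "\<And>\<epsilon>. \<epsilon> > 0 \<Longrightarrow> F \<epsilon> = M"
      using FM by (meson linorder_not_le order_antisym less_imp_le)
    then have "eventually (\<lambda>\<epsilon>. F \<epsilon> = M) (at_right 0)"
      by (intro eventually_mono[OF eventually_at_right_less[of "0::real"]]) auto
    then have "(F \<longlongrightarrow> M) (at_right 0)" by (rule tendsto_eventually)
    then have "Lim (at_right 0) F = M" by (intro tendsto_Lim) auto
    then have "c_const P m tn = M" unfolding c_const_def F_def S_def by simp
    then show False using assms(8) unfolding M_def by simp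
  qed
  then obtain \<epsilon> where ep: "\<epsilon> > 0" "F \<epsilon> < M" by blast
  have "emeasure m UNIV = (SUP K \<in> {K. K \<subseteq> UNIV \<and> compact K}. emeasure m K)"
    by (rule inner_regular) (use sm in \<open>auto simp: spm\<close>)
  moreover have "ennreal (M - \<epsilon>) < emeasure m UNIV"
    using Mpos ep(1) spm unfolding M_def
    by (simp add: emeasure_eq_measure ennreal_lessI)
  ultimately obtain K where K: "compact K" "ennreal (M - \<epsilon>) < emeasure m K"
    by (auto simp: less_SUP_iff)
  have Kb: "K \<in> sets borel" using K(1) by (simp add: compact_imp_closed)
  have "M - \<epsilon> < measure m K"
  proof (cases "M - \<epsilon> \<ge> 0")
    case True then show ?thesis using K(2) by (auto simp: emeasure_eq_measure ennreal_less_iff)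
  next
    case False then show ?thesis using measure_nonneg[of m K] by linarith
  qed
  moreover have "measure m (- K) = M - measure m K"
    using finite_measure_compl[of K] Kb sm spm unfolding M_def by (simp add: Compl_eq_Diff_UNIV)
  ultimately have "- K \<in> S \<epsilon>" unfolding S_def using Kb by auto
  then have le: "time_avg P m (tn n) (- K) \<le> F \<epsilon>" for n
  proof -
    assume mk: "- K \<in> S \<epsilon>"
    have KK: "- K \<in> sets borel" using Kb by auto
    have "time_avg P m (tn n) (- K) \<le> (SUP n. time_avg P m (tn n) (- K))"
      by (rule cSUP_upper[OF _ bdd1[OF KK]]) simp
    also have "\<dots> \<le> F \<epsilon>" unfolding F_def
      by (rule cSUP_upper[OF mk bdd2])
    finally show ?thesis .
  qed
  define \<delta> where "\<delta> = M - F \<epsilon>"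
  have dpos: "\<delta> > 0" using ep unfolding \<delta>_def by simp
  have geK: "\<And>n. time_avg P m (tn n) K \<ge> \<delta>"
    using le mtf_avg_compl[OF mtf Kb sm fm] assms(5) unfolding \<delta>_def M_def
    by (smt (verit))
  have "ereal \<delta> \<le> Limsup at_top (\<lambda>t::real. ereal (time_avg P m t K))"
    unfolding Limsup_def
  proof (rule INF_greatest)
    fix Q :: "real \<Rightarrow> bool" assume "Q \<in> {Q. eventually Q at_top}"
    then have "eventually (\<lambda>n. Q (tn n)) sequentially"
      using assms(7) by (simp add: filterlim_iff)
    then obtain n where "Q (tn n)" by (meson eventually_sequentially order_refl)
    then show "ereal \<delta> \<le> (SUP t\<in>Collect Q. ereal (time_avg P m t K))"
      using geK by (intro SUP_upper2[of "tn n"]) auto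
  qed
  then show ?thesis using K(1) dpos
    by (metis ereal_less(2) order_less_le_trans)
qed

end
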